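(* Let $n\ge 3$ and $1<\rho<3$. The supremum, over all configurations of closed unit balls with pairwise disjoint interiors, each tangent to the closed unit ball $B$ centered at the origin with interior disjoint from $B$, of the normalized measure $\omega_\rho(\rho S^{n-1}\cap\bigcup X)/\omega_\rho(\rho S^{n-1})$ of the part of $\rho S^{n-1}$ they cover equals $\tau_n A_{n,\rho}(1)$.
   Context: $\omega_\rho$ is the surface measure on the sphere $\rho S^{n-1}$ of radius $\rho$ centered at the origin. $A_{n,\rho}(1)=\omega_\rho(B_1\cap\rho S^{n-1})/\omega_\rho(\rho S^{n-1})$ where $B_1$ is a closed unit ball centered at distance $2$ from the origin. $\tau_n$ is the kissing number of $\mathbb{R}^n$: the maximum number of closed unit balls with pairwise disjoint interiors all touching a central closed unit ball and having interiors disjoint from it. *)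

theory Defs
  imports "HOL-Analysis.Analysis"
begin

text \<open>Surface measure on the sphere of radius rho centred at the origin, defined via the
  cone construction: the surface measure of a subset A of the sphere is DIM/rho times the
  Lebesgue measure of the cone of points t x with 0 <= t <= 1 and x in A.
  This coincides with the (n-1)-dimensional Hausdorff measure on the sphere.\<close>
definition omega :: "real \<Rightarrow> 'a::euclidean_space set \<Rightarrow> real" where
  "omega rho A = real DIM('a) / rho *
     measure lebesgue {t *\<^sub>R x | t x. 0 \<le> t \<and> t \<le> 1 \<and> x \<in> A \<inter> sphere 0 rho}"

definition kissing_config :: "'a::euclidean_space set \<Rightarrow> bool" where
  "kissing_config C \<longleftrightarrow>
     (\<forall>c\<in>C. cball c 1 \<inter> cball 0 1 \<noteq> {} \<and> ball c 1 \<inter> ball 0 1 = {}) \<and>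
     (\<forall>c\<in>C. \<forall>d\<in>C. c \<noteq> d \<longrightarrow> ball c 1 \<inter> ball d 1 = {})"

definition kissing_number :: "'a::euclidean_space itself \<Rightarrow> nat" where
  "kissing_number _ = Sup {card C | C :: 'a set. finite C \<and> kissing_config C}"

definition A_cap :: "'a::euclidean_space itself \<Rightarrow> real \<Rightarrow> real" where
  "A_cap _ rho = omega rho (cball (2 *\<^sub>R (SOME b. b \<in> (Basis :: 'a set))) 1 \<inter> sphere 0 rho)
                 / omega rho (sphere (0::'a) rho)"

end

theory Submission
  imports Defs
begin


typedef (overloaded) ('a::euclidean_space) bidx = "Basis :: 'a set" morphisms rep abs
  using nonempty_Basis by blast

instance bidx :: (euclidean_space) finite
proof
  have "(UNIV :: 'a bidx set) = abs ` Basis"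
    using type_definition.Abs_image[OF type_definition_bidx] by (rule sym)
  then show "finite (UNIV :: 'a bidx set)" by (metis finite_Basis finite_imageI)
qed

instantiation bidx :: (euclidean_space) wellorder
begin
definition less_eq_bidx :: "'a bidx \<Rightarrow> 'a bidx \<Rightarrow> bool" where "less_eq_bidx x y \<longleftrightarrow> to_nat x \<le> to_nat y"
definition less_bidx :: "'a bidx \<Rightarrow> 'a bidx \<Rightarrow> bool" where "less_bidx x y \<longleftrightarrow> to_nat x < to_nat y"
instance
proof
  fix P :: "'a bidx \<Rightarrow> bool" and a
  assume h: "\<And>x. (\<And>y. y < x \<Longrightarrow> P y) \<Longrightarrow> P x"
  show "P a"
  proof (induction "to_nat a" arbitrary: a rule: less_induct)
    case less
    then show ?case using h unfolding less_bidx_def by blast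
  qed
qed (auto simp: less_eq_bidx_def less_bidx_def inj_eq)
end

definition phi :: "'a::euclidean_space \<Rightarrow> real ^ 'a bidx" where
  "phi x = (\<chi> i. x \<bullet> rep i)"
definition psi :: "real ^ 'a bidx \<Rightarrow> 'a::euclidean_space" where
  "psi v = (\<Sum>i\<in>UNIV. v $ i *\<^sub>R rep i)"

lemma rep_Basis: "rep i \<in> Basis" using rep by auto

lemma sum_bidx: "(\<Sum>i\<in>UNIV. f (rep i)) = (\<Sum>b\<in>(Basis::'a::euclidean_space set). f b)"
proof -
  have "bij_betw rep (UNIV :: 'a bidx set) Basis"
    by (metis bij_betw_def inj_on_def rep_inject type_definition.Rep_range type_definition_bidx)
  then show ?thesis by (rule sum.reindex_bij_betw)
qed

lemma prod_bidx: "(\<Prod>i\<in>UNIV. f (rep i)) = (\<Prod>b\<in>(Basis::'a::euclidean_space set). f b)"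
proof -
  have "bij_betw rep (UNIV :: 'a bidx set) Basis"
    by (metis bij_betw_def inj_on_def rep_inject type_definition.Rep_range type_definition_bidx)
  then show ?thesis by (rule prod.reindex_bij_betw)
qed

lemma psi_inner: "psi v \<bullet> rep j = v $ j"
proof -
  have "psi v \<bullet> rep j = (\<Sum>i\<in>UNIV. v $ i * (rep i \<bullet> rep j))"
    by (simp add: psi_def inner_sum_left)
  also have "\<dots> = (\<Sum>i\<in>UNIV. if i = j then v $ i else 0)"
    by (rule sum.cong) (auto simp: inner_Basis rep_Basis rep_inject)
  finally show ?thesis by simp
qed

lemma phi_psi: "phi (psi v) = v"
  by (simp add: phi_def psi_inner vec_eq_iff)

lemma psi_phi: "psi (phi x) = x"
proof -
  have "psi (phi x) = (\<Sum>i\<in>UNIV. (x \<bullet> rep i) *\<^sub>R rep i)"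
    by (simp add: psi_def phi_def)
  also have "\<dots> = (\<Sum>b\<in>Basis. (x \<bullet> b) *\<^sub>R b)" by (rule sum_bidx)
  finally show ?thesis by (simp add: euclidean_representation)
qed

lemma linear_phi: "linear phi"
  by (auto simp: linear_iff phi_def vec_eq_iff inner_add_left)

lemma linear_psi: "linear psi"
  by (auto simp: linear_iff psi_def scaleR_add_left sum.distrib scaleR_sum_right)

lemma norm_phi: "norm (phi x) = norm x"
proof -
  have "norm (phi x) ^ 2 = (\<Sum>i\<in>UNIV. (x \<bullet> rep i)^2)"
    by (simp add: norm_vec_def L2_set_def phi_def sum_nonneg)
  also have "\<dots> = (\<Sum>b\<in>Basis. (x \<bullet> b)^2)" by (rule sum_bidx)
  also have "\<dots> = norm x ^ 2"
    by (metis (no_types, lifting) euclidean_inner power2_eq_square power2_norm_eq_inner sum.cong)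
  finally show ?thesis by (simp add: power2_eq_iff_nonneg)
qed

lemma norm_psi: "norm (psi v) = norm v"
  by (metis norm_phi phi_psi)

lemma prod_Basis_cart: "(\<Prod>b\<in>(Basis :: (real^'n) set). f b) = (\<Prod>i\<in>UNIV. f (axis i 1))"
proof -
  have B: "(Basis :: (real^'n) set) = range (\<lambda>i. axis i 1)"
    by (auto simp: Basis_vec_def)
  have "inj (\<lambda>i::'n. axis i (1::real))"
    by (auto simp: inj_on_def axis_eq_axis)
  then show ?thesis unfolding B by (simp add: prod.reindex)
qed

lemma psi_meas: "psi \<in> borel_measurable borel"
  by (intro borel_measurable_continuous_onI linear_continuous_on) (use linear_psi linear_conv_bounded_linear in blast)

lemma psi_vimage_box: "psi -` box l u = box (phi l) (phi u)"
proof -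
  have "psi v \<in> box l u \<longleftrightarrow> v \<in> box (phi l) (phi u)" for v
  proof -
    have "psi v \<in> box l u \<longleftrightarrow> (\<forall>b\<in>Basis. l \<bullet> b < psi v \<bullet> b \<and> psi v \<bullet> b < u \<bullet> b)"
      by (simp add: mem_box)
    also have "\<dots> \<longleftrightarrow> (\<forall>i. l \<bullet> rep i < psi v \<bullet> rep i \<and> psi v \<bullet> rep i < u \<bullet> rep i)"
      by (metis rep_Basis rep_cases)
    also have "\<dots> \<longleftrightarrow> v \<in> box (phi l) (phi u)"
      by (simp add: mem_box_cart psi_inner phi_def)
    finally show ?thesis .
  qed
  then show ?thesis by auto
qed

lemma distr_psi: "distr lborel borel psi = (lborel :: 'a::euclidean_space measure)"
proof (rule lborel_eqI[symmetric])
  fix l u :: 'a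
  assume le: "\<And>b. b \<in> Basis \<Longrightarrow> l \<bullet> b \<le> u \<bullet> b"
  have "emeasure (distr lborel borel psi) (box l u) = emeasure lborel (psi -` box l u)"
    using psi_meas by (subst emeasure_distr) auto
  also have "\<dots> = emeasure lborel (box (phi l) (phi u))" by (simp add: psi_vimage_box)
  also have "\<dots> = (\<Prod>b\<in>Basis. (phi u - phi l) \<bullet> b)"
    by (rule emeasure_lborel_box) (auto simp: Basis_vec_def phi_def inner_axis le rep_Basis)
  also have "\<dots> = (\<Prod>i\<in>UNIV. (u - l) \<bullet> rep i)"
    by (simp add: prod_Basis_cart inner_axis phi_def inner_diff_left)
  also have "\<dots> = (\<Prod>b\<in>Basis. (u - l) \<bullet> b)" using prod_bidx[of "\<lambda>b. (u - l) \<bullet> b"] by simp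
  finally show "emeasure (distr lborel borel psi) (box l u) = (\<Prod>b\<in>Basis. (u - l) \<bullet> b)" .
qed simp


lemma phi_image: "phi ` T = psi -` T"
  by (auto simp: phi_psi psi_phi) (metis image_eqI phi_psi)

lemma compact_phi_image: "compact T \<Longrightarrow> compact (phi ` T)"
  by (rule compact_continuous_image) (use linear_phi linear_continuous_on linear_conv_bounded_linear in blast)

lemma compact_psi_image: "compact T \<Longrightarrow> compact (psi ` T)"
  by (rule compact_continuous_image) (use linear_psi linear_continuous_on linear_conv_bounded_linear in blast)

lemma measure_phi: 
  fixes T :: "'a::euclidean_space set"
  assumes "compact T" shows "measure lebesgue (phi ` T) = measure lebesgue T"
proof -
  have cT: "T \<in> sets lborel" using assms by (simp add: borel_compact)
  have cP: "phi ` T \<in> sets lborel" using compact_phi_image[OF assms] by (simp add: borel_compact)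
  have "measure lebesgue (phi ` T) = measure lborel (psi -` T)"
    using cP by (simp add: phi_image)
  also have "\<dots> = measure (distr lborel borel psi) T"
    using psi_meas cT by (subst measure_distr) auto
  also have "\<dots> = measure lebesgue T" using cT by (simp add: distr_psi)
  finally show ?thesis .
qed

lemma measure_psi: 
  assumes "compact U" shows "measure lebesgue (psi ` U) = measure lebesgue U"
proof -
  have "phi ` psi ` U = U" by (force simp: phi_psi image_iff)
  then show ?thesis using measure_phi[OF compact_psi_image[OF assms]] by simp
qed

lemma rotation:
  fixes x y :: "'a::euclidean_space"
  assumes "norm x = norm y"
  obtains f h :: "'a \<Rightarrow> 'a" where "linear f" "\<And>z. f (h z) = z" "\<And>z. norm (f z) = norm z" "f x = y"
     "\<And>T. compact T \<Longrightarrow> measure lebesgue (f ` T) = measure lebesgue T"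
proof -
  obtain g where g: "orthogonal_transformation g" "g (phi x) = phi y"
    using orthogonal_transformation_exists[of "phi x" "phi y"] assms norm_phi by metis
  define f where "f = psi \<circ> g \<circ> phi"
  define h where "h = psi \<circ> inv g \<circ> phi"
  have lf: "linear f" unfolding f_def
    by (intro linear_compose linear_phi linear_psi orthogonal_transformation_linear g(1))
  have fh: "f (h z) = z" for z
    using orthogonal_transformation_bij[OF g(1)] by (simp add: f_def h_def phi_psi psi_phi bij_is_surj surj_f_inv_f)
  have nf: "norm (f z) = norm z" for z
    by (simp add: f_def norm_psi norm_phi orthogonal_transformation_norm[OF g(1)])
  have fx: "f x = y" by (simp add: f_def g psi_phi)
  have mf: "measure lebesgue (f ` T) = measure lebesgue T" if "compact T" for T
  proof -
    have c1: "compact (phi ` T)" using compact_phi_image that by blast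
    have c2: "compact (g ` phi ` T)"
      by (rule compact_continuous_image[OF _ c1]) (use g(1) orthogonal_transformation_linear linear_continuous_on linear_conv_bounded_linear in blast)
    have "f ` T = psi ` g ` phi ` T" by (auto simp: f_def)
    then have "measure lebesgue (f ` T) = measure lebesgue (g ` phi ` T)" using measure_psi[OF c2] by simp
    also have "\<dots> = measure lebesgue (phi ` T)"
      by (rule measure_orthogonal_image[OF g(1)]) (simp add: c1 lmeasurable_compact)
    also have "\<dots> = measure lebesgue T" by (rule measure_phi[OF that])
    finally show ?thesis .
  qed
  show ?thesis using that[OF lf fh nf fx mf] .
qed



definition sector :: "real \<Rightarrow> 'a::euclidean_space set \<Rightarrow> 'a set" where
  "sector rho A = {t *\<^sub>R x | t x. 0 \<le> t \<and> t \<le> 1 \<and> x \<in> A \<inter> sphere 0 rho}"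

lemma omega_sector: "omega rho A = real DIM('a) / rho * measure lebesgue (sector rho (A::'a::euclidean_space set))"
  by (simp add: omega_def sector_def)

lemma kiss_norm:
  fixes C :: "'a::euclidean_space set"
  assumes "kissing_config C" "c \<in> C" shows "norm c = 2"
proof -
  from assms obtain z where z: "dist c z \<le> 1" "norm z \<le> 1"
    unfolding kissing_config_def by (metis IntE all_not_in_conv mem_cball mem_cball_0)
  have "norm c \<le> dist c z + norm z"
    by (metis dist_0_norm dist_commute dist_triangle2)
  then have le: "norm c \<le> 2" using z by simp
  have "\<not> norm c < 2"
  proof
    assume lt: "norm c < 2"
    let ?z = "(1/2) *\<^sub>R c"
    have "norm ?z < 1" using lt by simp
    moreover have "dist c ?z < 1"
    proof -
      have "c - ?z = (1/2) *\<^sub>R c" by (simp add: algebra_simps flip: scaleR_add_left)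
      then show ?thesis using lt by (simp add: dist_norm)
    qed
    ultimately have "?z \<in> ball c 1 \<inter> ball 0 1" by (simp add: dist_norm)
    then show False using assms unfolding kissing_config_def by blast
  qed
  then show ?thesis using le by simp
qed

lemma kiss_dist:
  fixes C :: "'a::euclidean_space set"
  assumes "kissing_config C" "c \<in> C" "d \<in> C" "c \<noteq> d" shows "2 \<le> dist c d"
proof (rule ccontr)
  assume "\<not> 2 \<le> dist c d"
  then have lt: "dist c d < 2" by simp
  let ?m = "(1/2) *\<^sub>R (c + d)"
  have "c - ?m = (1/2) *\<^sub>R (c - d)" "d - ?m = - ((1/2) *\<^sub>R (c - d))" by (simp_all add: algebra_simps flip: scaleR_add_left)
  then have "dist c ?m < 1" "dist d ?m < 1" using lt by (simp_all add: dist_norm)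
  then have "?m \<in> ball c 1 \<inter> ball d 1" by simp
  then show False using assms unfolding kissing_config_def by blast
qed


lemma kiss_card_le:
  fixes C :: "'a::euclidean_space set"
  assumes "kissing_config C" "finite F" "F \<subseteq> C"
  shows "card F \<le> 3 ^ DIM('a)"
proof -
  let ?u = "measure lebesgue (ball (0::'a) 1)"
  have mb: "measure lebesgue (ball c r) = r ^ DIM('a) * ?u" if "r \<ge> 0" for c :: 'a and r
    using content_ball_conv_unit_ball[OF that, of c] by simp
  have upos: "?u > 0" using content_ball_pos[of 1 "0::'a"] by simp
  have "measure lebesgue (\<Union>c\<in>F. ball c 1) = (\<Sum>c\<in>F. measure lebesgue (ball c 1))"
  proof (rule measure_negligible_finite_Union_image[OF assms(2)])
    show "pairwise (\<lambda>x y. negligible (ball x 1 \<inter> ball y 1)) F"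
      using assms unfolding pairwise_def kissing_config_def by (metis negligible_empty subsetD)
  qed auto
  also have "\<dots> = (\<Sum>c\<in>F. ?u)"
  proof (rule sum.cong[OF refl])
    fix c :: 'a show "measure lebesgue (ball c 1) = ?u" using mb[of 1 c] by simp
  qed
  also have "\<dots> = card F * ?u" by simp
  finally have eq: "measure lebesgue (\<Union>c\<in>F. ball c 1) = card F * ?u" .
  have sub: "(\<Union>c\<in>F. ball c 1) \<subseteq> ball 0 3"
  proof
    fix z assume "z \<in> (\<Union>c\<in>F. ball c 1)"
    then obtain c where c: "c \<in> F" "dist c z < 1" by auto
    have "norm c = 2" using kiss_norm assms c by blast
    moreover have "norm z \<le> norm c + dist c z"
      by (metis dist_0_norm dist_triangle)
    ultimately show "z \<in> ball 0 3" using c by simp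
  qed
  have "measure lebesgue (\<Union>c\<in>F. ball c 1) \<le> measure lebesgue (ball (0::'a) 3)"
    by (rule measure_mono_fmeasurable[OF sub]) (use assms(2) in auto)
  then have "card F * ?u \<le> 3 ^ DIM('a) * ?u" using eq mb[of 3 0] by simp
  then have "real (card F) \<le> 3 ^ DIM('a)" using upos by simp
  then show ?thesis by (metis of_nat_le_iff of_nat_numeral of_nat_power)
qed

lemma kiss_finite:
  fixes C :: "'a::euclidean_space set"
  assumes "kissing_config C" shows "finite C"
proof (rule ccontr)
  assume "infinite C"
  then obtain F where "F \<subseteq> C" "finite F" "card F = Suc (3 ^ DIM('a))"
    using infinite_arbitrarily_large by blast
  then show False using kiss_card_le[OF assms] by fastforce
qed


lemma sector_image: "sector rho A = (\<lambda>p. fst p *\<^sub>R snd p) ` ({0..1} \<times> (A \<inter> sphere 0 rho))"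
  unfolding sector_def by force

lemma compact_sector:
  fixes A :: "'a::euclidean_space set"
  assumes "closed A" shows "compact (sector rho A)"
  unfolding sector_image
proof (rule compact_continuous_image)
  show "continuous_on ({0..1} \<times> (A \<inter> sphere 0 rho)) (\<lambda>p. fst p *\<^sub>R snd p)"
    by (intro continuous_intros)
  show "compact ({0..1::real} \<times> (A \<inter> sphere (0::'a) rho))"
    by (intro compact_Times closed_Int_compact assms) auto
qed

lemma norm_diff_sq: "norm (x - y)^2 = norm x^2 - 2*(x \<bullet> y) + norm (y::'a::real_inner)^2"
  by (simp add: power2_norm_eq_inner inner_diff_left inner_diff_right inner_commute)

lemma norm_add_sq: "norm (x + y)^2 = norm x^2 + 2*(x \<bullet> y) + norm (y::'a::real_inner)^2"
  by (simp add: power2_norm_eq_inner inner_add_left inner_add_right inner_commute)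

lemma cap_inter_span:
  fixes c d x :: "'a::euclidean_space"
  assumes "norm c = 2" "norm d = 2" "2 \<le> dist c d" "rho > 0"
    and x: "x \<in> cball c 1" "x \<in> cball d 1" "norm x = rho"
  shows "x \<in> span {c + d}"
proof -
  let ?v = "c + d"
  have "norm (x - c) ^ 2 \<le> 1" using x by (simp add: dist_norm norm_minus_commute power_le_one)
  then have h1: "rho^2 - 2 * (x \<bullet> c) + 4 \<le> 1"
    using assms x norm_diff_sq[of x c] by simp
  have "norm (x - d) ^ 2 \<le> 1" using x by (simp add: dist_norm norm_minus_commute power_le_one)
  then have h2: "rho^2 - 2 * (x \<bullet> d) + 4 \<le> 1"
    using assms x norm_diff_sq[of x d] by simp
  have xv: "x \<bullet> ?v \<ge> rho^2 + 3" using h1 h2 by (simp add: inner_add_right)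
  have "4 \<le> norm (c - d) ^ 2" using assms(3) proof -
    have "2 \<le> norm (c - d)" using assms(3) by (simp add: dist_norm)
    then have "2^2 \<le> norm (c - d)^2" by (rule power_mono) simp
    then show ?thesis by simp
  qed
  then have "4 \<le> 8 - 2 * (c \<bullet> d)"
    using assms norm_diff_sq[of c d] by simp
  then have v2: "norm ?v ^ 2 \<le> 12"
    using assms norm_add_sq[of c d] by simp
  have "(rho * norm ?v)^2 \<le> (rho^2 + 3)^2"
  proof -
    have "(rho * norm ?v)^2 = rho^2 * norm ?v ^2" by (simp add: power_mult_distrib)
    also have "\<dots> \<le> rho^2 * 12" using v2 by (simp add: mult_left_mono)
    also have "\<dots> \<le> (rho^2 + 3)^2"
    proof -
      have "(rho^2 + 3)^2 - rho^2 * 12 = (rho^2 - 3)^2" by (simp add: power2_eq_square algebra_simps)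
      moreover have "0 \<le> (rho^2 - 3)^2" by simp
      ultimately show ?thesis by linarith
    qed
    finally show ?thesis .
  qed
  then have le1: "rho * norm ?v \<le> rho^2 + 3"
    by (rule power2_le_imp_le) simp
  have cs: "x \<bullet> ?v \<le> norm x * norm ?v" by (rule norm_cauchy_schwarz)
  have eq: "x \<bullet> ?v = norm x * norm ?v" using xv le1 cs x by simp
  then have cseq: "norm x *\<^sub>R ?v = norm ?v *\<^sub>R x" by (simp add: norm_cauchy_schwarz_eq)
  have "0 \<le> rho^2" by simp
  then have "x \<bullet> ?v > 0" using xv by linarith
  then have nv: "norm ?v \<noteq> 0" by auto
  have "x = (1/norm ?v) *\<^sub>R (norm ?v *\<^sub>R x)" using nv by simp
  also have "\<dots> = (1/norm ?v) *\<^sub>R (norm x *\<^sub>R ?v)" using cseq by simp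
  finally have "x = (1/norm ?v) *\<^sub>R (norm x *\<^sub>R ?v)" .
  then show ?thesis by (metis span_base span_scale singletonI)
qed


lemma sector_inter_neg:
  fixes c d :: "'a::euclidean_space"
  assumes "DIM('a) \<ge> 2" "norm c = 2" "norm d = 2" "2 \<le> dist c d" "rho > 0"
  shows "negligible (sector rho (cball c 1) \<inter> sector rho (cball d 1))"
proof (rule negligible_subset)
  show "negligible (span {c + d})"
  proof (rule negligible_lowdim)
    have "dim (span {c + d}) \<le> 1" using dim_le_card[of "{c + d}" "{c+d}"] by (simp add: dim_span)
    then show "dim (span {c + d}) < DIM('a)" using assms(1) by linarith
  qed
  show "sector rho (cball c 1) \<inter> sector rho (cball d 1) \<subseteq> span {c + d}"
  proof
    fix z assume z: "z \<in> sector rho (cball c 1) \<inter> sector rho (cball d 1)"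
    then obtain t x where tx: "z = t *\<^sub>R x" "0 \<le> t" "x \<in> cball c 1" "norm x = rho"
      unfolding sector_def by auto
    obtain s y where sy: "z = s *\<^sub>R y" "0 \<le> s" "y \<in> cball d 1" "norm y = rho"
      using z unfolding sector_def by auto
    show "z \<in> span {c + d}"
    proof (cases "t = 0 \<or> s = 0")
      case True then show ?thesis using tx sy by (auto simp: span_zero)
    next
      case False
      have "norm z = t * rho" using tx(1,2,4) by simp
      moreover have "norm z = s * rho" using sy(1,2,4) by simp
      ultimately have "t * rho = s * rho" by linarith
      then have "t = s" using assms(5) by simp
      then have "x = y" using tx sy False by simp
      then have "x \<in> span {c + d}"
        using cap_inter_span[OF assms(2-5)] tx sy by blast
      then show ?thesis using tx by (simp add: span_scale)
    qed
  qed
qed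

lemma sector_rot:
  fixes c b :: "'a::euclidean_space"
  assumes "norm c = 2" "norm b = 1" "rho > 0"
  shows "measure lebesgue (sector rho (cball c 1)) = measure lebesgue (sector rho (cball (2 *\<^sub>R b) 1))"
proof -
  have nrm: "norm (2 *\<^sub>R b) = norm c" using assms by simp
  obtain f h where f: "linear f" "\<And>z. f (h z) = z" "\<And>z. norm (f z) = norm z" "f (2 *\<^sub>R b) = c"
     "\<And>T. compact T \<Longrightarrow> measure lebesgue (f ` T) = measure lebesgue T"
    using rotation[OF nrm] by blast
  have df: "dist (f u) (f w) = dist u w" for u w
    by (metis dist_norm f(1) f(3) linear_diff)
  have "f ` sector rho (cball (2 *\<^sub>R b) 1) = sector rho (cball c 1)"
  proof
    show "f ` sector rho (cball (2 *\<^sub>R b) 1) \<subseteq> sector rho (cball c 1)"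
    proof
      fix z assume "z \<in> f ` sector rho (cball (2 *\<^sub>R b) 1)"
      then obtain t x where tx: "z = f (t *\<^sub>R x)" "0 \<le> t" "t \<le> 1" "dist (2 *\<^sub>R b) x \<le> 1" "norm x = rho"
        unfolding sector_def by auto
      have "z = t *\<^sub>R f x" using tx f(1) by (simp add: linear_scale)
      moreover have "dist c (f x) \<le> 1" using tx df f(4) by metis
      moreover have "norm (f x) = rho" using tx f(3) by simp
      ultimately show "z \<in> sector rho (cball c 1)" using tx unfolding sector_def by auto
    qed
    show "sector rho (cball c 1) \<subseteq> f ` sector rho (cball (2 *\<^sub>R b) 1)"
    proof
      fix z assume "z \<in> sector rho (cball c 1)"
      then obtain t y where ty: "z = t *\<^sub>R y" "0 \<le> t" "t \<le> 1" "dist c y \<le> 1" "norm y = rho"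
        unfolding sector_def by auto
      let ?x = "h y"
      have fx: "f ?x = y" by (rule f(2))
      have "dist (2 *\<^sub>R b) ?x \<le> 1" using ty df f(4) fx by metis
      moreover have "norm ?x = rho" using ty f(3) fx by metis
      ultimately have "t *\<^sub>R ?x \<in> sector rho (cball (2 *\<^sub>R b) 1)" using ty unfolding sector_def by auto
      moreover have "f (t *\<^sub>R ?x) = z" using ty f(1) fx by (simp add: linear_scale)
      ultimately show "z \<in> f ` sector rho (cball (2 *\<^sub>R b) 1)" by (metis image_eqI)
    qed
  qed
  then show ?thesis using f(5)[OF compact_sector[of "cball (2 *\<^sub>R b) 1" rho]] by simp
qed



lemma sector_Int_sphere: "sector rho (A \<inter> sphere 0 rho) = sector rho A"
  by (simp add: sector_def Int_assoc)

lemma sector_Int_sphere': "sector rho (sphere 0 rho \<inter> A) = sector rho A"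
  by (metis Int_commute sector_Int_sphere)

lemma sector_UN: "sector rho (\<Union>c\<in>C. f c) = (\<Union>c\<in>C. sector rho (f c))"
  unfolding sector_def by blast

lemma config_value:
  fixes C :: "'a::euclidean_space set"
  assumes "DIM('a) \<ge> 2" "rho > 0" "kissing_config C"
  shows "omega rho (sphere (0::'a) rho \<inter> (\<Union>c\<in>C. cball c 1)) / omega rho (sphere (0::'a) rho)
     = real (card C) * A_cap TYPE('a) rho"
proof -
  define b0 :: 'a where "b0 = (SOME b. b \<in> Basis)"
  have b0: "b0 \<in> Basis" unfolding b0_def by (rule someI_ex) (use nonempty_Basis in blast)
  then have nb0: "norm b0 = 1" by simp
  define m0 where "m0 = measure lebesgue (sector rho (cball (2 *\<^sub>R b0) 1))"
  have fin: "finite C" by (rule kiss_finite[OF assms(3)])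
  have "measure lebesgue (sector rho (sphere 0 rho \<inter> (\<Union>c\<in>C. cball c 1)))
      = measure lebesgue (\<Union>c\<in>C. sector rho (cball c 1))"
    by (simp add: sector_Int_sphere' sector_UN)
  also have "\<dots> = (\<Sum>c\<in>C. measure lebesgue (sector rho (cball c 1)))"
  proof (rule measure_negligible_finite_Union_image[OF fin])
    show "sector rho (cball c 1) \<in> lmeasurable" for c :: 'a
      by (rule lmeasurable_compact[OF compact_sector]) simp
    show "pairwise (\<lambda>x y. negligible (sector rho (cball x 1) \<inter> sector rho (cball y 1))) C"
      unfolding pairwise_def
      using sector_inter_neg[OF assms(1) _ _ _ assms(2)] kiss_norm[OF assms(3)] kiss_dist[OF assms(3)] by blast
  qed
  also have "\<dots> = (\<Sum>c\<in>C. m0)"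
  proof (rule sum.cong[OF refl])
    fix c assume "c \<in> C"
    then have "norm c = 2" by (rule kiss_norm[OF assms(3)])
    then show "measure lebesgue (sector rho (cball c 1)) = m0"
      unfolding m0_def using sector_rot[OF _ nb0 assms(2)] by blast
  qed
  also have "\<dots> = real (card C) * m0" by simp
  finally have eq: "measure lebesgue (sector rho (sphere 0 rho \<inter> (\<Union>c\<in>C. cball c 1))) = real (card C) * m0" .
  have "A_cap TYPE('a) rho = (real DIM('a) / rho * m0) / omega rho (sphere (0::'a) rho)"
    unfolding A_cap_def omega_sector[of rho "cball (2 *\<^sub>R (SOME b. b \<in> (Basis::'a set))) 1 \<inter> sphere 0 rho"]
    by (simp add: sector_Int_sphere m0_def b0_def)
  then show ?thesis unfolding omega_sector[of rho "sphere 0 rho \<inter> (\<Union>c\<in>C. cball c 1)"] eq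
    by (simp add: omega_sector)
qed

theorem mainTheorem10:
  assumes "DIM('a::euclidean_space) \<ge> 3" and "1 < rho" and "rho < 3"
  shows "Sup {omega rho (sphere (0::'a) rho \<inter> (\<Union>c\<in>C. cball c 1)) / omega rho (sphere (0::'a) rho)
              | C :: 'a set. kissing_config C}
         = real (kissing_number TYPE('a)) * A_cap TYPE('a) rho"
proof -
  have d2: "DIM('a) \<ge> 2" and rpos: "rho > 0" using assms by auto
  define K where "K = {card C | C :: 'a set. finite C \<and> kissing_config C}"
  have Kb: "K \<subseteq> {..3 ^ DIM('a)}" unfolding K_def using kiss_card_le by fastforce
  then have Kfin: "finite K" using finite_subset by blast
  have "kissing_config ({} :: 'a set)" by (simp add: kissing_config_def)
  then have Kne: "K \<noteq> {}" unfolding K_def by blast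
  have tau: "kissing_number TYPE('a) = Max K"
    unfolding kissing_number_def K_def[symmetric] by (rule cSup_eq_Max[OF Kfin Kne])
  have Anonneg: "A_cap TYPE('a) rho \<ge> 0"
    unfolding A_cap_def omega_def using rpos by simp
  show ?thesis
  proof (rule cSup_eq_maximum)
    have "Max K \<in> K" using Kfin Kne by simp
    then obtain C0 :: "'a set" where C0: "kissing_config C0" "card C0 = Max K" unfolding K_def by auto
    show "real (kissing_number TYPE('a)) * A_cap TYPE('a) rho \<in> {omega rho (sphere (0::'a) rho \<inter> (\<Union>c\<in>C. cball c 1)) / omega rho (sphere (0::'a) rho)
              | C :: 'a set. kissing_config C}"
      using config_value[OF d2 rpos C0(1)] C0 tau by (metis (mono_tags, lifting) mem_Collect_eq)
  next
    fix x assume "x \<in> {omega rho (sphere (0::'a) rho \<inter> (\<Union>c\<in>C. cball c 1)) / omega rho (sphere (0::'a) rho)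
              | C :: 'a set. kissing_config C}"
    then obtain C :: "'a set" where C: "kissing_config C" "x = omega rho (sphere (0::'a) rho \<inter> (\<Union>c\<in>C. cball c 1)) / omega rho (sphere (0::'a) rho)"
      by blast
    have "card C \<in> K" unfolding K_def using C(1) kiss_finite by blast
    then have "card C \<le> kissing_number TYPE('a)" using tau Kfin by simp
    then show "x \<le> real (kissing_number TYPE('a)) * A_cap TYPE('a) rho"
      using C config_value[OF d2 rpos C(1)] Anonneg by (simp add: mult_right_mono)
  qed
qed

end
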